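(* Let $K$ be a field of characteristic $\neq 2$ containing a square root $i$ of $-1$, and let $A\in K\setminus\{0\}$. For every integer $n\ge1$, $$\mathcal C_A(n)=\#\{T:\ T \text{ is on the } (\alpha,0)\text{-Euclid tree for some integer }\alpha\ge1,\ \max T=n\}+2,$$ and consequently $\mathcal C_A(n)=C_0(n)+1$.
   Context: Solutions are triples $(x,y,z)\in K[t]^3$ with $x^2+y^2+z^2=Axyz$; $\deg 0=-\infty$; the height is $h(x,y,z)=\max\{\deg x,\deg y,\deg z\}$; a Markoff triple is a solution with $h>0$ and $\deg x\le\deg y\le\deg z$; its signature is $S(x,y,z)=(\deg x,\deg y,\deg z)$. $\mathcal C_A(n)$ is the number of distinct signatures $S(P)$ of Markoff triples $P$ with $h(P)=n$. For integers $\alpha\ge1$ (more generally $\alpha\ge 0$) and $\beta\ge0$, define on triples of integers $\Gamma_{\beta,1}(\tau_1,\tau_2,\tau_3)=(\tau_2,\tau_3,\tau_2+\tau_3+\beta)$ and $\Gamma_{\beta,2}(\tau_1,\tau_2,\tau_3)=(\tau_1,\tau_3,\tau_1+\tau_3+\beta)$. The $(\alpha,\beta)$-Euclid tree is the set of triples obtained from the root $(\alpha,\alpha,2\alpha+\beta)$ by finitely many (possibly zero) applications of $\Gamma_{\beta,1},\Gamma_{\beta,2}$; "$T$ is on the tree" means $T$ belongs to this set, and $\max T$ is the largest entry of $T$. Triples are counted as distinct elements. For $\beta\ge0$ and $n\ge1$, $C_\beta(n)=\#\{T: T\text{ is on the }(\alpha,\beta)\text{-Euclid tree for some integer }\alpha\ge1,\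 \max T=n\}+1$. *)

theory Defs
  imports "HOL-Computational_Algebra.Polynomial" "HOL-Library.Option_ord"
begin

text \<open>Degree with deg 0 = -infinity, modelled as None (the bottom of the option order).\<close>
definition pdeg :: "'a::zero poly \<Rightarrow> int option" where
  "pdeg p = (if p = 0 then None else Some (int (degree p)))"

definition markoff_sol :: "'a::comm_ring_1 \<Rightarrow> 'a poly \<Rightarrow> 'a poly \<Rightarrow> 'a poly \<Rightarrow> bool" where
  "markoff_sol A x y z \<longleftrightarrow> x^2 + y^2 + z^2 = [:A:] * x * y * z"

definition height :: "'a::zero poly \<Rightarrow> 'a poly \<Rightarrow> 'a poly \<Rightarrow> int option" where
  "height x y z = max (pdeg x) (max (pdeg y) (pdeg z))"

definition markoff_triple :: "'a::comm_ring_1 \<Rightarrow> 'a poly \<Rightarrow> 'a poly \<Rightarrow> 'a poly \<Rightarrow> bool" where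
  "markoff_triple A x y z \<longleftrightarrow> markoff_sol A x y z \<and> height x y z > Some 0
     \<and> pdeg x \<le> pdeg y \<and> pdeg y \<le> pdeg z"

definition signature :: "'a::zero poly \<Rightarrow> 'a poly \<Rightarrow> 'a poly \<Rightarrow> int option \<times> int option \<times> int option" where
  "signature x y z = (pdeg x, pdeg y, pdeg z)"

definition CA :: "'a::comm_ring_1 \<Rightarrow> int \<Rightarrow> nat" where
  "CA A n = card {signature x y z | x y z. markoff_triple A x y z \<and> height x y z = Some n}"

fun Gamma1 :: "int \<Rightarrow> int \<times> int \<times> int \<Rightarrow> int \<times> int \<times> int" where
  "Gamma1 \<beta> (t1, t2, t3) = (t2, t3, t2 + t3 + \<beta>)"

fun Gamma2 :: "int \<Rightarrow> int \<times> int \<times> int \<Rightarrow> int \<times> int \<times> int" where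
  "Gamma2 \<beta> (t1, t2, t3) = (t1, t3, t1 + t3 + \<beta>)"

inductive_set euclid_tree :: "int \<Rightarrow> int \<Rightarrow> (int \<times> int \<times> int) set" for \<alpha> \<beta> where
  root: "(\<alpha>, \<alpha>, 2*\<alpha> + \<beta>) \<in> euclid_tree \<alpha> \<beta>"
| g1: "T \<in> euclid_tree \<alpha> \<beta> \<Longrightarrow> Gamma1 \<beta> T \<in> euclid_tree \<alpha> \<beta>"
| g2: "T \<in> euclid_tree \<alpha> \<beta> \<Longrightarrow> Gamma2 \<beta> T \<in> euclid_tree \<alpha> \<beta>"

fun max3 :: "int \<times> int \<times> int \<Rightarrow> int" where
  "max3 (a, b, c) = max a (max b c)"

definition tree_count :: "int \<Rightarrow> int \<Rightarrow> nat" where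
  "tree_count \<beta> n = card {T. \<exists>\<alpha>::int. \<alpha> \<ge> 1 \<and> T \<in> euclid_tree \<alpha> \<beta> \<and> max3 T = n}"

definition C_beta :: "int \<Rightarrow> int \<Rightarrow> nat" where
  "C_beta \<beta> n = tree_count \<beta> n + 1"

end

theory Submission
  imports Defs
begin

lemma degA:
  fixes x y z :: "'a::field poly"
  assumes nz: "x \<noteq> 0" "y \<noteq> 0" "z \<noteq> 0" and A: "A \<noteq> 0"
    and sol: "x^2 + y^2 + z^2 = [:A:] * x * y * z"
  shows "degree z \<le> degree x + degree y"
proof (rule ccontr)
  assume c: "\<not> ?thesis"
  have e: "z^2 = [:A:] * x * y * z - x^2 - y^2" using sol by (simp add: algebra_simps)
  have d1: "degree (z^2) = 2 * degree z" using nz by (simp add: degree_power_eq)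
  have d2: "degree ([:A:] * x * y * z) = degree x + degree y + degree z"
    using nz A by (simp add: degree_mult_eq)
  have d3: "degree (x^2) = 2 * degree x" "degree (y^2) = 2 * degree y"
    using nz by (simp_all add: degree_power_eq)
  have "degree ([:A:] * x * y * z - x^2 - y^2) < 2 * degree z"
    apply (rule le_less_trans[OF degree_diff_le_max])
    apply (subst max_less_iff_conj, rule conjI)
     apply (rule le_less_trans[OF degree_diff_le_max])
    using c d2 d3 by auto
  then show False using e d1 by simp
qed

lemma degB:
  fixes x y z :: "'a::field poly"
  assumes nz: "x \<noteq> 0" "y \<noteq> 0" "z \<noteq> 0" and A: "A \<noteq> 0"
    and sol: "x^2 + y^2 + z^2 = [:A:] * x * y * z"
    and o: "1 \<le> degree x" "degree x \<le> degree y" "degree y \<le> degree z"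
  shows "degree x + degree y \<le> degree z"
proof (rule ccontr)
  assume c: "\<not> ?thesis"
  define w where "w = [:A:] * x * y - z"
  have d2: "degree ([:A:] * x * y) = degree x + degree y"
    using nz A by (simp add: degree_mult_eq)
  have dw: "degree w = degree x + degree y"
    unfolding w_def using d2 c degree_add_eq_left[of "-z" "[:A:] * x * y"] by simp
  hence wnz: "w \<noteq> 0" using o by auto
  have e: "z * w = x^2 + y^2" using sol unfolding w_def by (simp add: algebra_simps power2_eq_square)
  have d1: "degree (z * w) = degree z + degree x + degree y" using nz wnz dw by (simp add: degree_mult_eq)
  have d3: "degree (x^2) = 2 * degree x" "degree (y^2) = 2 * degree y"
    using nz by (simp_all add: degree_power_eq)
  have "degree (x^2 + y^2) \<le> 2 * degree y"
    using degree_add_le_max[of "x^2" "y^2"] d3 o by auto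
  then show False using e d1 o by simp
qed

lemma tree_shape:
  assumes "T \<in> euclid_tree \<alpha> 0" "\<alpha> \<ge> 1"
  shows "\<exists>a b. T = (a, b, a + b) \<and> 1 \<le> a \<and> a \<le> b"
  using assms
proof (induction rule: euclid_tree.induct)
  case root 
  have "(\<alpha>, \<alpha>, 2 * \<alpha> + 0) = (\<alpha>, \<alpha>, \<alpha> + \<alpha>)" by simp
  with root have "(\<alpha>, \<alpha>, 2 * \<alpha> + 0) = (\<alpha>, \<alpha>, \<alpha> + \<alpha>) \<and> 1 \<le> \<alpha> \<and> \<alpha> \<le> \<alpha>" by simp
  then show ?case by blast
next
  case (g1 T)
  then obtain a b where "T = (a, b, a + b)" "1 \<le> a" "a \<le> b" by blast
  then have "Gamma1 0 T = (b, a + b, b + (a + b)) \<and> 1 \<le> b \<and> b \<le> a + b" by simp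
  then show ?case by blast
next
  case (g2 T)
  then obtain a b where "T = (a, b, a + b)" "1 \<le> a" "a \<le> b" by blast
  then have "Gamma2 0 T = (a, a + b, a + (a + b)) \<and> 1 \<le> a \<and> a \<le> a + b" by simp
  then show ?case by blast
qed

lemma tree_complete:
  "1 \<le> a \<Longrightarrow> a \<le> b \<Longrightarrow> \<exists>\<alpha>\<ge>1. (a, b, a + b) \<in> euclid_tree \<alpha> 0"
proof (induction "nat (a + b)" arbitrary: a b rule: less_induct)
  case less
  show ?case
  proof (cases "a = b")
    case True
    have "(a, b, a + b) = (a, a, 2 * a + 0)" using True by simp
    then show ?thesis using less.prems euclid_tree.root[of a 0] by metis
  next
    case False
    show ?thesis
    proof (cases "b - a \<le> a")
      case True
      have "nat ((b - a) + a) < nat (a + b)" using less.prems by simp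
      then obtain \<alpha> where al: "\<alpha> \<ge> 1" "(b - a, a, (b - a) + a) \<in> euclid_tree \<alpha> 0"
        using less.hyps[of "b - a" a] less.prems False True by force
      have "Gamma1 0 (b - a, a, (b - a) + a) = (a, b, a + b)" by simp
      with euclid_tree.g1[OF al(2)] al(1) show ?thesis by metis
    next
      case F2: False
      have "nat (a + (b - a)) < nat (a + b)" using less.prems by simp
      then obtain \<alpha> where al: "\<alpha> \<ge> 1" "(a, b - a, a + (b - a)) \<in> euclid_tree \<alpha> 0"
        using less.hyps[of a "b - a"] less.prems False F2 by force
      have "Gamma2 0 (a, b - a, a + (b - a)) = (a, b, a + b)" by simp
      with euclid_tree.g2[OF al(2)] al(1) show ?thesis by metis
    qed
  qed
qed

lemma pdeg_nz: "p \<noteq> 0 \<Longrightarrow> pdeg p = Some (int (degree p))"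
  by (simp add: pdeg_def)
lemma pdeg_0[simp]: "pdeg 0 = None"
  by (simp add: pdeg_def)

lemma vieta1:
  fixes x y z :: "'a::comm_ring_1 poly"
  assumes "x^2 + y^2 + z^2 = [:A:] * x * y * z"
  shows "y^2 + z^2 + ([:A:]*y*z - x)^2 = [:A:] * y * z * ([:A:]*y*z - x)"
proof -
  have "y^2 + z^2 + ([:A:]*y*z - x)^2 - [:A:] * y * z * ([:A:]*y*z - x)
      = x^2 + y^2 + z^2 - [:A:] * x * y * z"
    by (simp add: power2_eq_square algebra_simps)
  then show ?thesis using assms by simp
qed

lemma vieta2:
  fixes x y z :: "'a::comm_ring_1 poly"
  assumes "x^2 + y^2 + z^2 = [:A:] * x * y * z"
  shows "x^2 + z^2 + ([:A:]*x*z - y)^2 = [:A:] * x * z * ([:A:]*x*z - y)"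
proof -
  have "x^2 + z^2 + ([:A:]*x*z - y)^2 - [:A:] * x * z * ([:A:]*x*z - y)
      = x^2 + y^2 + z^2 - [:A:] * x * y * z"
    by (simp add: power2_eq_square algebra_simps)
  then show ?thesis using assms by simp
qed

lemma realize:
  fixes A i :: "'a::field"
  assumes T: "T \<in> euclid_tree \<alpha> 0" and al: "\<alpha> \<ge> 1" and A: "A \<noteq> 0" and i: "i * i = -1"
  shows "\<exists>x y z :: 'a poly. x^2 + y^2 + z^2 = [:A:] * x * y * z \<and> x \<noteq> 0 \<and> y \<noteq> 0 \<and> z \<noteq> 0
     \<and> T = (int (degree x), int (degree y), int (degree z))"
  using T
proof (induction rule: euclid_tree.induct)
  case root
  define x :: "'a poly" where "x = monom 1 (nat \<alpha>)"
  define y where "y = smult i x"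
  define z where "z = [:A:] * x * y"
  have inz: "i \<noteq> 0" using i by auto
  have xnz: "x \<noteq> 0" unfolding x_def by simp
  have ynz: "y \<noteq> 0" unfolding y_def using xnz inz by simp
  have znz: "z \<noteq> 0" unfolding z_def using xnz ynz A by simp
  have dx: "degree x = nat \<alpha>" unfolding x_def by (simp add: degree_monom_eq)
  have dy: "degree y = nat \<alpha>" unfolding y_def using dx inz by simp
  have dz: "degree z = nat \<alpha> + nat \<alpha>" unfolding z_def using xnz ynz A dx dy by (simp add: degree_mult_eq)
  have yy: "y^2 = - (x^2)" unfolding y_def
    by (simp add: power2_eq_square i)
  have sol: "x^2 + y^2 + z^2 = [:A:] * x * y * z"
    using yy unfolding z_def by (simp add: power2_eq_square algebra_simps)
  have "(\<alpha>, \<alpha>, 2 * \<alpha> + 0) = (int (degree x), int (degree y), int (degree z))"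
    using dx dy dz al by simp
  then show ?case using sol xnz ynz znz by blast
next
  case (g1 T)
  obtain x y z :: "'a poly" where h: "x^2 + y^2 + z^2 = [:A:] * x * y * z" "x \<noteq> 0" "y \<noteq> 0" "z \<noteq> 0"
     "T = (int (degree x), int (degree y), int (degree z))" using g1.IH by blast
  obtain a b where ab: "T = (a, b, a + b)" "1 \<le> a" "a \<le> b" using tree_shape[OF g1.hyps al] by blast
  define w where "w = [:A:]*y*z - x"
  have dp: "degree ([:A:]*y*z) = degree y + degree z" using h A by (simp add: degree_mult_eq)
  have lt: "degree x < degree ([:A:]*y*z)" using dp h(5) ab by simp
  have dw: "degree w = degree y + degree z"
    unfolding w_def using degree_add_eq_left[of "-x" "[:A:]*y*z"] lt dp by simp
  have wnz: "w \<noteq> 0" using dw lt dp by auto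
  have "Gamma1 0 T = (int (degree y), int (degree z), int (degree w))" using h(5) dw by simp
  then show ?case using vieta1[OF h(1)] h wnz unfolding w_def by blast
next
  case (g2 T)
  obtain x y z :: "'a poly" where h: "x^2 + y^2 + z^2 = [:A:] * x * y * z" "x \<noteq> 0" "y \<noteq> 0" "z \<noteq> 0"
     "T = (int (degree x), int (degree y), int (degree z))" using g2.IH by blast
  obtain a b where ab: "T = (a, b, a + b)" "1 \<le> a" "a \<le> b" using tree_shape[OF g2.hyps al] by blast
  define w where "w = [:A:]*x*z - y"
  have dp: "degree ([:A:]*x*z) = degree x + degree z" using h A by (simp add: degree_mult_eq)
  have lt: "degree y < degree ([:A:]*x*z)" using dp h(5) ab by simp
  have dw: "degree w = degree x + degree z"
    unfolding w_def using degree_add_eq_left[of "-y" "[:A:]*x*z"] lt dp by simp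
  have wnz: "w \<noteq> 0" using dw lt dp by auto
  have "Gamma2 0 T = (int (degree x), int (degree z), int (degree w))" using h(5) dw by simp
  then show ?case using vieta2[OF h(1)] h wnz unfolding w_def by blast
qed

theorem lemma3p1:
  fixes A :: "'a::field" and n :: int
  assumes "(2::'a) \<noteq> 0"
    and "\<exists>i::'a. i * i = -1"
    and "A \<noteq> 0"
    and "n \<ge> 1"
  shows "CA A n = tree_count 0 n + 2 \<and> CA A n = C_beta 0 n + 1"
proof -
  note two = assms(1) and A = assms(3) and n = assms(4)
  obtain i :: 'a where i: "i * i = -1" using assms(2) by blast
  have inz: "i \<noteq> 0" using i by auto
  define S where "S = {signature x y z | x y z :: 'a poly. markoff_triple A x y z \<and> height x y z = Some n}"
  define TN where "TN = {T. \<exists>\<alpha>::int. \<alpha> \<ge> 1 \<and> T \<in> euclid_tree \<alpha> 0 \<and> max3 T = n}"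
  define f :: "int \<times> int \<times> int \<Rightarrow> int option \<times> int option \<times> int option"
    where "f = (\<lambda>(a,b,c). (Some a, Some b, Some c))"
  define s1 :: "int option \<times> int option \<times> int option" where "s1 = (None, Some n, Some n)"
  define s2 :: "int option \<times> int option \<times> int option" where "s2 = (Some 0, Some n, Some n)"
  have TNshape: "T \<in> TN \<Longrightarrow> \<exists>a b. T = (a, b, a + b) \<and> 1 \<le> a \<and> a \<le> b \<and> a + b = n" for T
  proof -
    assume "T \<in> TN"
    then obtain \<alpha> where "\<alpha> \<ge> 1" "T \<in> euclid_tree \<alpha> 0" "max3 T = n" unfolding TN_def by blast
    then obtain a b where "T = (a, b, a + b)" "1 \<le> a" "a \<le> b" using tree_shape by blast
    with \<open>max3 T = n\<close> show ?thesis by auto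
  qed
  have finTN: "finite TN"
  proof (rule finite_subset)
    show "TN \<subseteq> {1..n} \<times> {1..n} \<times> {1..n}" using TNshape by fastforce
  qed simp
  have injf: "inj_on f TN" unfolding f_def inj_on_def by auto
  have s1n: "s1 \<notin> f ` TN" unfolding s1_def f_def by auto
  have s2n: "s2 \<notin> f ` TN" using TNshape unfolding s2_def f_def by fastforce
  have s12: "s1 \<noteq> s2" unfolding s1_def s2_def by simp
  have sub1: "S \<subseteq> insert s1 (insert s2 (f ` TN))"
  proof
    fix s assume "s \<in> S"
    then obtain x y z :: "'a poly" where mt: "markoff_triple A x y z" and ht: "height x y z = Some n"
      and s: "s = signature x y z" unfolding S_def by blast
    have sol: "x^2 + y^2 + z^2 = [:A:] * x * y * z" and o1: "pdeg x \<le> pdeg y" and o2: "pdeg y \<le> pdeg z"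
      using mt unfolding markoff_triple_def markoff_sol_def by auto
    have o3: "pdeg x \<le> pdeg z" using o1 o2 by (rule order_trans)
    have hz: "pdeg z = Some n" using ht o3 o2 unfolding height_def by (simp add: max_def)
    hence znz: "z \<noteq> 0" by auto
    hence dz: "int (degree z) = n" using hz by (simp add: pdeg_nz)
    show "s \<in> insert s1 (insert s2 (f ` TN))"
    proof (cases "x = 0")
      case True
      have "y^2 = - (z^2)" using sol True by (simp add: eq_neg_iff_add_eq_0)
      hence ynz: "y \<noteq> 0" using znz by auto
      have "degree (y^2) = degree (z^2)" using \<open>y^2 = - (z^2)\<close> by simp
      hence "degree y = degree z" using ynz znz by (simp add: degree_power_eq)
      hence "s = s1" unfolding s s1_def signature_def using True ynz hz dz by (simp add: pdeg_nz)
      then show ?thesis by simp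
    next
      case xnz: False
      have ynz: "y \<noteq> 0" using o1 xnz by (auto simp: pdeg_nz pdeg_def split: if_splits)
      have dxy: "degree x \<le> degree y" using o1 xnz ynz by (simp add: pdeg_nz)
      have dyz: "degree y \<le> degree z" using o2 znz ynz by (simp add: pdeg_nz)
      have le1: "degree z \<le> degree x + degree y" using degA[OF xnz ynz znz A sol] .
      show ?thesis
      proof (cases "degree x = 0")
        case True
        hence "s = s2" unfolding s s2_def signature_def using xnz ynz znz le1 dyz dz
          by (simp add: pdeg_nz)
        then show ?thesis by simp
      next
        case False
        have le2: "degree x + degree y \<le> degree z" using degB[OF xnz ynz znz A sol] False dxy dyz by simp
        obtain \<alpha> where al: "\<alpha> \<ge> 1" "(int (degree x), int (degree y), int (degree x) + int (degree y)) \<in> euclid_tree \<alpha> 0"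
          using tree_complete[of "int (degree x)" "int (degree y)"] False dxy by auto
        have T: "(int (degree x), int (degree y), int (degree z)) \<in> TN"
          unfolding TN_def using al le1 le2 dz by (intro CollectI exI[where x=\<alpha>]) auto
        have "s = f (int (degree x), int (degree y), int (degree z))"
          unfolding s f_def signature_def using xnz ynz znz by (simp add: pdeg_nz)
        then show ?thesis using T by blast
      qed
    qed
  qed
  have sub2: "insert s1 (insert s2 (f ` TN)) \<subseteq> S"
  proof -
    define y :: "'a poly" where "y = monom 1 (nat n)"
    have ynz: "y \<noteq> 0" unfolding y_def by simp
    have dy: "int (degree y) = n" unfolding y_def using n by (simp add: degree_monom_eq)
    have "s1 \<in> S"
    proof -
      define z where "z = smult i y"
      have znz: "z \<noteq> 0" unfolding z_def using ynz inz by simp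
      have dz: "int (degree z) = n" unfolding z_def using dy inz by simp
      have yy: "z^2 = - (y^2)" unfolding z_def
        by (simp add: power2_eq_square i)
      have sol: "0^2 + y^2 + z^2 = [:A:] * 0 * y * z" using yy by simp
      have "markoff_triple A 0 y z \<and> height 0 y z = Some n"
        unfolding markoff_triple_def markoff_sol_def height_def
        using sol ynz znz dy dz n by (simp add: pdeg_nz)
      moreover have "signature 0 y z = s1" unfolding signature_def s1_def using ynz znz dy dz by (simp add: pdeg_nz)
      ultimately show ?thesis unfolding S_def by blast
    qed
    moreover have "s2 \<in> S"
    proof -
      define c where "c = 2 / A"
      have cnz: "c \<noteq> 0" unfolding c_def using two A by simp
      have Ac: "A * c = 2" unfolding c_def using A by simp
      define x where "x = [:c:]"
      define z where "z = y - [:i * c:]"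
      have xnz: "x \<noteq> 0" unfolding x_def using cnz by simp
      have dz0: "degree z = degree y"
      proof -
        have e: "y - [:i * c:] = y + [:- (i * c):]" by (simp add: diff_conv_add_uminus)
        have d: "degree (y + [:- (i * c):]) = degree y"
          using degree_add_eq_left[of "[:- (i * c):]" y] dy n by simp
        show ?thesis unfolding z_def by (simp only: e d)
      qed
      hence znz: "z \<noteq> 0" using dy n by auto
      have dz: "int (degree z) = n" using dz0 dy by simp
      have AX: "[:A:] * x = 2"
      proof -
        have "[:A:] * x = [:A * c:]" unfolding x_def by simp
        also have "\<dots> = [:2:]" using Ac by simp
        also have "\<dots> = 2" by (simp add: numeral_poly)
        finally show ?thesis .
      qed
      define q where "q = [:i * c:]"
      have ic: "i * c * (i * c) = - (c * c)"
      proof -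
        have "i * c * (i * c) = (i * i) * (c * c)" by algebra
        then show ?thesis using i by simp
      qed
      have II: "q * q = - (x * x)" unfolding q_def x_def using ic by simp
      have sol: "x^2 + y^2 + z^2 = [:A:] * x * y * z"
      proof -
        have e1: "[:A:] * x * y * z = 2 * y * z" using AX by simp
        have e2: "x^2 + y^2 + (y - q)^2 = (x * x + q * q) + 2 * y * (y - q)" by algebra
        have "x^2 + y^2 + z^2 = 2 * y * z" unfolding z_def q_def[symmetric] e2 II by simp
        then show ?thesis using e1 by simp
      qed
      have "markoff_triple A x y z \<and> height x y z = Some n"
        unfolding markoff_triple_def markoff_sol_def height_def
        using sol xnz ynz znz dy dz n by (simp add: pdeg_nz x_def)
      moreover have "signature x y z = s2" unfolding signature_def s2_def using xnz ynz znz dy dz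
        by (simp add: pdeg_nz x_def)
      ultimately show ?thesis unfolding S_def by blast
    qed
    moreover have "f ` TN \<subseteq> S"
    proof
      fix s assume "s \<in> f ` TN"
      then obtain T where T: "T \<in> TN" and s: "s = f T" by blast
      obtain a b where ab: "T = (a, b, a + b)" "1 \<le> a" "a \<le> b" "a + b = n" using TNshape[OF T] by blast
      obtain \<alpha> where al: "\<alpha> \<ge> 1" "T \<in> euclid_tree \<alpha> 0" using T unfolding TN_def by blast
      obtain x y z :: "'a poly" where h: "x^2 + y^2 + z^2 = [:A:] * x * y * z" "x \<noteq> 0" "y \<noteq> 0" "z \<noteq> 0"
        "T = (int (degree x), int (degree y), int (degree z))" using realize[OF al(2) al(1) A i] by blast
      have "markoff_triple A x y z \<and> height x y z = Some n"
        unfolding markoff_triple_def markoff_sol_def height_def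
        using h ab by (simp add: pdeg_nz)
      moreover have "signature x y z = s" unfolding signature_def s f_def using h ab by (simp add: pdeg_nz)
      ultimately show "s \<in> S" unfolding S_def by blast
    qed
    ultimately show ?thesis by blast
  qed
  have SE: "S = insert s1 (insert s2 (f ` TN))" using sub1 sub2 by blast
  have "card S = card TN + 2"
    unfolding SE using finTN s1n s2n s12 injf by (simp add: card_image)
  moreover have "CA A n = card S" unfolding CA_def S_def by simp
  moreover have "tree_count 0 n = card TN" unfolding tree_count_def TN_def by simp
  ultimately show ?thesis unfolding C_beta_def by simp
qed

end
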